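(* Let $X$ be a random variable geometrically distributed with parameter $f \in (0,1]$, i.e. $\Pr[X = k] = (1-f)^{k-1} f$ for $k \in \{1,2,\dots\}$. Then with $d_2 = e^{\gamma}$, where $\gamma$ is the Euler–Mascheroni constant, $$\log(\mathbb{E}[X]) \le \mathbb{E}[\log(d_2 X)]$$ for all $f \in (0,1]$. *)

theory Defs
  imports "HOL-Probability.Probability"
begin

end

theory Submission
  imports Defs
begin

lemma exp_geom:
  fixes f :: real and g :: "nat \<Rightarrow> real"
  assumes f: "0 < f" "f \<le> 1" and s: "(\<lambda>n. (1-f)^n*f*g n) sums s" and g: "\<And>n. g n \<ge> 0"
  shows "measure_pmf.expectation (geometric_pmf f) g = s"
proof -
  have "measure_pmf.expectation (geometric_pmf f) g =
        (\<integral>n. pmf (geometric_pmf f) n * g n \<partial>count_space UNIV)"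
    unfolding measure_pmf_eq_density by (subst integral_density) auto
  also have eq: "(\<lambda>n. pmf (geometric_pmf f) n * g n) = (\<lambda>n. (1-f)^n*f*g n)"
    using f by auto
  have "summable (\<lambda>n. norm ((1-f)^n*f*g n))"
    using s f g by (simp add: sums_iff)
  hence "integrable (count_space UNIV) (\<lambda>n. pmf (geometric_pmf f) n * g n)"
    unfolding integrable_count_space_nat_iff eq .
  hence "(\<integral>n. pmf (geometric_pmf f) n * g n \<partial>count_space UNIV) = s"
    using s by (subst integral_count_space_nat) (simp_all add: sums_iff eq)
  finally show ?thesis .
qed

theorem lemma8:
  fixes f :: real
  assumes "f \<in> {0<..1}"
  shows "ln (measure_pmf.expectation (geometric_pmf f) (\<lambda>n. real (Suc n)))
         \<le> measure_pmf.expectation (geometric_pmf f)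
              (\<lambda>n. ln (exp euler_mascheroni * real (Suc n)))"
proof (cases "f = 1")
  case True
  then show ?thesis using euler_mascheroni_pos by simp
next
  case False
  define q where "q = 1 - f"
  have f: "0 < f" "f \<le> 1" using assms by auto
  have q: "0 < q" "q < 1" using f False q_def by auto
  have fq: "f = 1 - q" using q_def by simp
  have s1: "(\<lambda>n. (1-f)^n*f*real (Suc n)) sums (1/f)"
  proof -
    have a: "(\<lambda>n. f * (q^n * real n)) sums (f * (q / (1-q)^2))"
      using geometric_sums_times_n[of q] q by (intro sums_mult) auto
    have b: "(\<lambda>n. f * q^n) sums (f * (1/(1-q)))"
      using geometric_sums[of q] q by (intro sums_mult) auto
    have "(\<lambda>n. f * (q^n * real n) + f * q^n) sums (f * (q / (1-q)^2) + f * (1/(1-q)))"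
      by (rule sums_add[OF a b])
    moreover have "f * (q / (1-q)^2) + f * (1/(1-q)) = 1/f"
    proof -
      have "1 - q = f" using fq by simp
      hence "f * (q / (1-q)^2) + f * (1/(1-q)) = q / f + 1" using f by (simp add: power2_eq_square)
      also have "\<dots> = 1/f" using f fq by (simp add: field_simps)
      finally show ?thesis .
    qed
    ultimately show ?thesis unfolding q_def by (simp add: algebra_simps)
  qed
  have E1: "measure_pmf.expectation (geometric_pmf f) (\<lambda>n. real (Suc n)) = 1/f"
    by (rule exp_geom[OF f s1]) simp
  have a_summ: "summable (\<lambda>n. q^n * ln (real (Suc n)))"
  proof (rule summable_comparison_test[where g="\<lambda>n. q^n * real n + q^n"])
    show "\<exists>N. \<forall>n\<ge>N. norm (q^n * ln (real (Suc n))) \<le> q^n * real n + q^n"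
    proof (intro exI allI impI)
      fix n :: nat
      have "ln (real (Suc n)) \<le> real (Suc n)" using ln_le_minus_one[of "real (Suc n)"] by simp
      hence "q^n * ln (real (Suc n)) \<le> q^n * real (Suc n)"
        using q by (intro mult_left_mono) auto
      thus "norm (q^n * ln (real (Suc n))) \<le> q^n * real n + q^n"
        using q by (simp add: algebra_simps)
    qed
    show "summable (\<lambda>n. q^n * real n + q^n)"
      using geometric_sums_times_n[of q] geometric_sums[of q] q
      by (intro summable_add) (auto simp: sums_iff)
  qed
  define A where "A = (\<Sum>n. q^n * ln (real (Suc n)))"
  have sA: "(\<lambda>n. q^n * ln (real (Suc n))) sums A" using a_summ A_def by (simp add: sums_iff)
  have sA1: "(\<lambda>n. q^(Suc n) * ln (real (Suc (Suc n)))) sums A"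
    using sA sums_Suc_iff[of "\<lambda>n. q^n * ln (real (Suc n))" A] by simp
  have sA2: "(\<lambda>n. q^(Suc n) * ln (real (Suc n))) sums (q * A)"
    using sums_mult[OF sA, of q] by (simp add: mult.assoc)
  define d where "d = (\<lambda>n::nat. ln (real (n+2)) - ln (real (n+1)))"
  have sD: "(\<lambda>n. q^(Suc n) * d n) sums (A - q*A)"
    using sums_diff[OF sA1 sA2] unfolding d_def by (simp add: algebra_simps)
  have s2: "(\<lambda>n. (1-f)^n*f*ln (real (Suc n))) sums (A - q*A)"
    using sums_mult[OF sA, of f] unfolding fq by (simp add: algebra_simps)
  have s3: "(\<lambda>n. (1-f)^n*f*ln (exp euler_mascheroni * real (Suc n))) sums (euler_mascheroni + (A - q*A))"
  proof -
    have g: "(\<lambda>n. (1-f)^n) sums (1/f)"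
      using geometric_sums[of "1-f"] f False by simp
    have "(\<lambda>n. (1-f)^n * (f*euler_mascheroni)) sums (1/f * (f*euler_mascheroni))"
      by (rule sums_mult2[OF g])
    hence e: "(\<lambda>n. (1-f)^n*f*euler_mascheroni) sums euler_mascheroni"
      using f by (simp add: mult.assoc)
    have "(\<lambda>n. (1-f)^n*f*euler_mascheroni + (1-f)^n*f*ln (real (Suc n))) sums (euler_mascheroni + (A - q*A))"
      by (rule sums_add[OF e s2])
    moreover have "\<And>n. ln (exp euler_mascheroni * real (Suc n)) = euler_mascheroni + ln (real (Suc n))"
      by (subst ln_mult) auto
    ultimately show ?thesis by (simp add: algebra_simps)
  qed
  have E2: "measure_pmf.expectation (geometric_pmf f) (\<lambda>n. ln (exp euler_mascheroni * real (Suc n))) = euler_mascheroni + (A - q*A)"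
  proof (rule exp_geom[OF f s3])
    fix n
    have "0 \<le> ln (real (Suc n))" by simp
    moreover have "ln (exp euler_mascheroni * real (Suc n)) = euler_mascheroni + ln (real (Suc n))"
      by (subst ln_mult) auto
    ultimately show "0 \<le> ln (exp euler_mascheroni * real (Suc n))"
      using euler_mascheroni_pos by simp
  qed
  have sL: "(\<lambda>n. q^(Suc n) / real (Suc n)) sums (- ln f)"
  proof -
    have "(\<lambda>n. - ((-(-q))^n) / of_nat n) sums ln (1 + (-q))"
      using ln_series'[of "-q"] q by simp
    hence "(\<lambda>n. q^n / real n) sums (- ln f)"
      using sums_minus[of "\<lambda>n. - ((-(-q))^n) / of_nat n"] fq by simp
    thus ?thesis
      using sums_Suc_iff[of "\<lambda>n. q^n / real n" "- ln f"] by simp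
  qed
  define e where "e = (\<lambda>n::nat. inverse (real (n+1)) + ln (real (n+1)) - ln (real (n+2)))"
  have se: "e sums euler_mascheroni" unfolding e_def by (rule euler_mascheroni_sum_real)
  have e_nn: "e n \<ge> 0" for n
  proof -
    have "ln (real (n+2)) - ln (real (n+1)) = ln (real (n+2) / real (n+1))"
      by (simp add: ln_div)
    also have "\<dots> \<le> real (n+2) / real (n+1) - 1" by (rule ln_le_minus_one) auto
    also have "\<dots> = inverse (real (n+1))" by (simp add: field_simps)
    finally show ?thesis unfolding e_def by simp
  qed
  have sqe: "(\<lambda>n. q^(Suc n) * e n) sums (- ln f - (A - q*A))"
  proof -
    have "(\<lambda>n. q^(Suc n) / real (Suc n) - q^(Suc n) * d n) sums (- ln f - (A - q*A))"
      by (rule sums_diff[OF sL sD])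
    moreover have "q^(Suc n) / real (Suc n) - q^(Suc n) * d n = q^(Suc n) * e n" for n
      unfolding d_def e_def by (simp add: field_simps)
    ultimately show ?thesis by simp
  qed
  have "- ln f - (A - q*A) \<le> euler_mascheroni"
  proof (rule sums_le[OF _ sqe se])
    fix n
    have "q^(Suc n) \<le> 1" using q by (intro power_le_one) auto
    thus "q^(Suc n) * e n \<le> e n" using e_nn[of n] mult_right_mono[of "q^(Suc n)" 1 "e n"] by simp
  qed
  then show ?thesis using E1 E2 f by (simp add: ln_div)
qed

end
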